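(* Let $\mathcal{C}$ be a connected unicyclic graph (a connected graph with exactly one cycle) with $n$ vertices, whose unique cycle has odd length, and assume $q\geq 3$. Then $X=\mathbb{T}$ is the projective torus in $\mathbb{P}^{n-1}$, i.e. $X=\{[(x_1,\ldots,x_n)]\in\mathbb{P}^{n-1}: x_i\in K^*\text{ for all } i\}$.
   Context: Let $K=\mathbb{F}_q$ be a finite field. For a graph $\mathcal{C}$ on vertices $y_1,\ldots,y_n$ (simple, no loops) with edges $f_1,\ldots,f_s$, let $v_i=\sum_{y_j\in f_i}e_j\in\{0,1\}^n$ be the characteristic vector of $f_i$ and write $x^{v_i}=\prod_j x_j^{v_{ij}}$. The algebraic toric set is $X=\{[(x^{v_1},\ldots,x^{v_s})]\in\mathbb{P}^{s-1}: x\in (K^* )^n\}$. (A connected unicyclic graph on $n$ vertices has exactly $s=n$ edges.) *)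

theory Defs
  imports "HOL-Library.FuncSet"
begin

definition simple_graph :: "'v set \<Rightarrow> 'v set set \<Rightarrow> bool" where
  "simple_graph V E \<longleftrightarrow> finite V \<and> (\<forall>e\<in>E. e \<subseteq> V \<and> card e = 2)"

definition adj :: "'v set set \<Rightarrow> 'v \<Rightarrow> 'v \<Rightarrow> bool" where
  "adj E u v \<longleftrightarrow> {u, v} \<in> E"

definition connected_graph :: "'v set \<Rightarrow> 'v set set \<Rightarrow> bool" where
  "connected_graph V E \<longleftrightarrow> V \<noteq> {} \<and> (\<forall>u\<in>V. \<forall>v\<in>V. (adj E)\<^sup>*\<^sup>* u v)"

definition is_cycle :: "'v set set \<Rightarrow> 'v set set \<Rightarrow> bool" where
  "is_cycle E C \<longleftrightarrow> (\<exists>vs. length vs \<ge> 3 \<and> distinct vs \<and>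
      C = {{vs ! i, vs ! ((i + 1) mod length vs)} | i. i < length vs} \<and> C \<subseteq> E)"

definition cycle_length :: "'v set set \<Rightarrow> nat" where
  "cycle_length C = card C"

definition unicyclic :: "'v set \<Rightarrow> 'v set set \<Rightarrow> bool" where
  "unicyclic V E \<longleftrightarrow> connected_graph V E \<and> (\<exists>!C. is_cycle E C)"

text \<open>Points of projective space P(K^E): nonzero vectors K^E (functions vanishing off E)
  modulo nonzero scalars; a point is represented by its equivalence class.\<close>
definition proj_point :: "'e set \<Rightarrow> ('e \<Rightarrow> 'a::field) \<Rightarrow> ('e \<Rightarrow> 'a) set" where
  "proj_point E y = {restrict (\<lambda>e. c * y e) E | c. c \<noteq> 0}"

definition toric_set :: "'v set \<Rightarrow> 'v set set \<Rightarrow> ('v set \<Rightarrow> 'a::field) set set" where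
  "toric_set V E = {proj_point E (\<lambda>e. \<Prod>v\<in>e. x v) | x. \<forall>v\<in>V. x v \<noteq> 0}"

definition proj_torus :: "'e set \<Rightarrow> ('e \<Rightarrow> 'a::field) set set" where
  "proj_torus E = {proj_point E y | y. \<forall>e\<in>E. y e \<noteq> 0}"

end

theory Submission
  imports Defs "HOL-Library.Transitive_Closure_Table"
begin

lemma is_cycle_mono: "is_cycle F C \<Longrightarrow> F \<subseteq> G \<Longrightarrow> is_cycle G C"
  unfolding is_cycle_def by blast

lemma path_cycle:
  assumes "(adj F)\<^sup>*\<^sup>* v u" "u \<noteq> v" "{u,v} \<notin> F"
  shows "\<exists>C. is_cycle (insert {u,v} F) C"
proof -
  obtain xs where "rtrancl_path (adj F) v xs u"
    using assms(1) rtranclp_eq_rtrancl_path by metis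
  then obtain xs' where p: "rtrancl_path (adj F) v xs' u" and d: "distinct (v # xs')"
    using rtrancl_path_distinct by metis
  have ne: "xs' \<noteq> []"
  proof
    assume "xs' = []"
    with p have "v = u" by (auto elim: rtrancl_path.cases)
    with assms(2) show False by simp
  qed
  have lst: "last xs' = u" using rtrancl_path_last[OF p ne] .
  have len: "length xs' \<ge> 2"
  proof (rule ccontr)
    assume "\<not> length xs' \<ge> 2"
    moreover have "length xs' \<noteq> 0" using ne by simp
    ultimately have "length xs' = 1" by linarith
    then obtain w where w: "xs' = [w]" by (cases xs') auto
    with lst have "w = u" by simp
    with rtrancl_path_nth[OF p, of 0] w have "adj F v u" by simp
    hence "{v,u} \<in> F" by (simp add: adj_def)
    with assms(3) show False by (simp add: insert_commute)
  qed
  define vs where "vs = v # xs'"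
  have "length vs \<ge> 3" using len by (simp add: vs_def)
  moreover have "distinct vs" using d by (simp add: vs_def)
  moreover have "\<forall>i < length vs. {vs ! i, vs ! ((i + 1) mod length vs)} \<in> insert {u,v} F"
  proof (intro allI impI)
    fix i assume i: "i < length vs"
    show "{vs ! i, vs ! ((i + 1) mod length vs)} \<in> insert {u,v} F"
    proof (cases "i < length xs'")
      case True
      hence "(i + 1) mod length vs = i + 1" by (simp add: vs_def)
      moreover have "vs ! (i+1) = xs' ! i" by (simp add: vs_def)
      moreover have "adj F (vs ! i) (xs' ! i)" using rtrancl_path_nth[OF p True] by (simp add: vs_def)
      ultimately show ?thesis by (simp add: adj_def)
    next
      case False
      with i have ii: "i = length xs'" by (simp add: vs_def)
      hence "(i + 1) mod length vs = 0" by (simp add: vs_def)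
      moreover have "vs ! i = u" using ii lst ne by (simp add: vs_def last_conv_nth)
      moreover have "vs ! 0 = v" by (simp add: vs_def)
      ultimately show ?thesis by simp
    qed
  qed
  ultimately show ?thesis unfolding is_cycle_def by blast
qed

lemma card2E: "card e = 2 \<Longrightarrow> \<exists>a b. a \<noteq> b \<and> e = {a,b}"
  by (metis card_2_iff)

lemma forest_color:
  assumes "finite F" "\<forall>e\<in>F. card e = 2" "\<not>(\<exists>C. is_cycle F C)"
  shows "\<exists>\<sigma>::'v\<Rightarrow>bool. \<forall>a b. {a,b} \<in> F \<longrightarrow> \<sigma> a \<noteq> \<sigma> b"
  using assms
proof (induction F rule: finite_induct)
  case empty
  then show ?case by simp
next
  case (insert e F)
  have acyc: "\<not>(\<exists>C. is_cycle F C)" using insert.prems(2) is_cycle_mono by blast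
  have "\<exists>\<sigma>::'v\<Rightarrow>bool. \<forall>a b. {a,b} \<in> F \<longrightarrow> \<sigma> a \<noteq> \<sigma> b"
    using insert.IH insert.prems(1) acyc by blast
  then obtain \<sigma> :: "'v\<Rightarrow>bool" where s: "\<forall>a b. {a,b} \<in> F \<longrightarrow> \<sigma> a \<noteq> \<sigma> b" by blast
  obtain u v where uv: "u \<noteq> v" "e = {u,v}" using card2E insert.prems(1) by blast
  define Cv where "Cv = {w. (adj F)\<^sup>*\<^sup>* v w}"
  have vC: "v \<in> Cv" by (simp add: Cv_def)
  have uC: "u \<notin> Cv"
  proof
    assume "u \<in> Cv"
    hence "(adj F)\<^sup>*\<^sup>* v u" by (simp add: Cv_def)
    from path_cycle[OF this uv(1)] insert.hyps(2) uv(2) insert.prems(2) show False by blast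
  qed
  have clos: "{a,b} \<in> F \<Longrightarrow> a \<in> Cv \<longleftrightarrow> b \<in> Cv" for a b
  proof -
    assume ab: "{a,b} \<in> F"
    hence "adj F a b" "adj F b a" by (auto simp: adj_def insert_commute)
    thus ?thesis unfolding Cv_def
      by (meson mem_Collect_eq rtranclp.rtrancl_into_rtrancl)
  qed
  define \<sigma>' where "\<sigma>' w = (if w \<in> Cv \<and> \<sigma> u = \<sigma> v then \<not> \<sigma> w else \<sigma> w)" for w
  have "\<forall>a b. {a,b} \<in> insert e F \<longrightarrow> \<sigma>' a \<noteq> \<sigma>' b"
  proof (intro allI impI)
    fix a b assume "{a,b} \<in> insert e F"
    then consider "{a,b} = {u,v}" | "{a,b} \<in> F" using uv by auto
    then show "\<sigma>' a \<noteq> \<sigma>' b"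
    proof cases
      case 1
      then have "(a = u \<and> b = v) \<or> (a = v \<and> b = u)" by (simp add: doubleton_eq_iff)
      then show ?thesis using vC uC by (auto simp: \<sigma>'_def)
    next
      case 2
      then show ?thesis using clos[OF 2] s by (auto simp: \<sigma>'_def)
    qed
  qed
  then show ?case by blast
qed

lemma forest_solve:
  fixes F :: "'v set set"
  assumes "finite F" "\<forall>e\<in>F. card e = 2" "\<not>(\<exists>C. is_cycle F C)"
  shows "\<forall>y. (\<forall>e\<in>F. y e \<noteq> 0) \<longrightarrow> (\<exists>x. (\<forall>w. x w \<noteq> (0::'a::field)) \<and> (\<forall>a b. {a,b} \<in> F \<longrightarrow> x a * x b = y {a,b}))"
  using assms
proof (induction F rule: finite_induct)
  case empty
  then show ?case by (auto intro: exI[of _ "\<lambda>_. 1"])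
next
  case (insert e F)
  have acyc: "\<not>(\<exists>C. is_cycle F C)" using insert.prems(2) is_cycle_mono by blast
  have IH: "\<forall>y. (\<forall>e\<in>F. y e \<noteq> 0) \<longrightarrow> (\<exists>x. (\<forall>w. x w \<noteq> (0::'a)) \<and> (\<forall>a b. {a,b} \<in> F \<longrightarrow> x a * x b = y {a,b}))"
    using insert.IH insert.prems(1) acyc by blast
  have "\<exists>\<sigma>::'v\<Rightarrow>bool. \<forall>a b. {a,b} \<in> F \<longrightarrow> \<sigma> a \<noteq> \<sigma> b"
    using forest_color[OF insert.hyps(1) _ acyc] insert.prems(1) by blast
  then obtain \<sigma> :: "'v\<Rightarrow>bool" where s: "\<forall>a b. {a,b} \<in> F \<longrightarrow> \<sigma> a \<noteq> \<sigma> b" by blast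
  obtain u v where uv: "u \<noteq> v" "e = {u,v}" using card2E insert.prems(1) by blast
  define Cv where "Cv = {w. (adj F)\<^sup>*\<^sup>* v w}"
  have vC: "v \<in> Cv" by (simp add: Cv_def)
  have uC: "u \<notin> Cv"
  proof
    assume "u \<in> Cv"
    hence "(adj F)\<^sup>*\<^sup>* v u" by (simp add: Cv_def)
    from path_cycle[OF this uv(1)] insert.hyps(2) uv(2) insert.prems(2) show False by blast
  qed
  have clos: "{a,b} \<in> F \<Longrightarrow> a \<in> Cv \<longleftrightarrow> b \<in> Cv" for a b
  proof -
    assume ab: "{a,b} \<in> F"
    hence "adj F a b" "adj F b a" by (auto simp: adj_def insert_commute)
    thus ?thesis unfolding Cv_def
      by (meson mem_Collect_eq rtranclp.rtrancl_into_rtrancl)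
  qed
  show ?case
  proof (intro allI impI)
    fix y :: "'v set \<Rightarrow> 'a" assume y: "\<forall>e\<in>insert e F. y e \<noteq> 0"
    then obtain x where x0: "\<forall>w. x w \<noteq> 0" and xs: "\<forall>a b. {a,b} \<in> F \<longrightarrow> x a * x b = y {a,b}"
      using IH by auto
    define l where "l = y e / (x u * x v)"
    have l0: "l \<noteq> 0" using y x0 by (simp add: l_def)
    define x' where "x' w = x w * (if w \<in> Cv then (if \<sigma> w = \<sigma> v then l else inverse l) else 1)" for w
    have "\<forall>w. x' w \<noteq> 0" using x0 l0 by (simp add: x'_def)
    moreover have "\<forall>a b. {a,b} \<in> insert e F \<longrightarrow> x' a * x' b = y {a,b}"
    proof (intro allI impI)
      fix a b assume "{a,b} \<in> insert e F"
      then consider "{a,b} = {u,v}" | "{a,b} \<in> F" using uv by auto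
      then show "x' a * x' b = y {a,b}"
      proof cases
        case 1
        then have "(a = u \<and> b = v) \<or> (a = v \<and> b = u)" by (simp add: doubleton_eq_iff)
        then show ?thesis using vC uC x0 uv 1
          by (auto simp: x'_def l_def field_simps)
      next
        case 2
        have "\<sigma> a \<noteq> \<sigma> b" using s 2 by blast
        then show ?thesis using clos[OF 2] xs 2 l0
          by (auto simp: x'_def field_simps)
      qed
    qed
    ultimately show "\<exists>x. (\<forall>w. x w \<noteq> 0) \<and> (\<forall>a b. {a,b} \<in> insert e F \<longrightarrow> x a * x b = y {a,b})"
      by blast
  qed
qed

lemma cycle_card:
  assumes "length vs \<ge> 3" "distinct vs"
  shows "card {{vs ! i, vs ! ((i + 1) mod length vs)} | i. i < length vs} = length vs"
proof -
  let ?k = "length vs"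
  let ?f = "\<lambda>i. {vs ! i, vs ! ((i + 1) mod ?k)}"
  have eq: "{{vs ! i, vs ! ((i + 1) mod length vs)} | i. i < length vs} = ?f ` {..<?k}" by auto
  have "inj_on ?f {..<?k}"
  proof (rule inj_onI)
    fix i j assume i: "i \<in> {..<?k}" and j: "j \<in> {..<?k}" and fij: "?f i = ?f j"
    have i1: "(i+1) mod ?k < ?k" "(j+1) mod ?k < ?k"
    proof -
      have kp: "0 < ?k" using assms(1) by linarith
      show "(i+1) mod ?k < ?k" "(j+1) mod ?k < ?k" using kp by simp_all
    qed
    from fij have "(vs!i = vs!j \<and> vs!((i+1) mod ?k) = vs!((j+1) mod ?k)) \<or>
        (vs!i = vs!((j+1) mod ?k) \<and> vs!((i+1) mod ?k) = vs!j)"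
      by (simp add: doubleton_eq_iff)
    then show "i = j"
    proof
      assume "vs!i = vs!j \<and> vs!((i+1) mod ?k) = vs!((j+1) mod ?k)"
      then show ?thesis using assms(2) i j by (simp add: nth_eq_iff_index_eq)
    next
      assume h: "vs!i = vs!((j+1) mod ?k) \<and> vs!((i+1) mod ?k) = vs!j"
      have a: "i = (j+1) mod ?k"
        using h nth_eq_iff_index_eq[OF assms(2)] i i1 by simp
      have b: "(i+1) mod ?k = j"
        using h nth_eq_iff_index_eq[OF assms(2)] j i1 by simp
      have ik: "i < ?k" "j < ?k" using i j by auto
      show ?thesis
      proof (cases "j + 1 < ?k")
        case True
        then have "i = j + 1" using a by simp
        then show ?thesis using b ik assms(1)
          by (cases "j + 2 < ?k") (auto simp: mod_if split: if_splits)
      next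
        case False
        then have "j + 1 = ?k" using ik by simp
        then have "i = 0" using a by simp
        then show ?thesis using b assms(1) \<open>j + 1 = ?k\<close> by simp
      qed
    qed
  qed
  then show ?thesis using eq card_image by (metis card_lessThan)
qed

lemma proj_point_scale:
  assumes "\<forall>e\<in>E. z e = b * y e" "b \<noteq> 0"
  shows "proj_point E z = proj_point E (y :: 'e \<Rightarrow> 'a::field)"
proof -
  have "restrict (\<lambda>e. c * z e) E = restrict (\<lambda>e. (c * b) * y e) E" for c
    using assms(1) by (auto simp: restrict_def)
  moreover have "restrict (\<lambda>e. c * y e) E = restrict (\<lambda>e. (c / b) * z e) E" for c
    using assms by (auto simp: restrict_def)
  ultimately show ?thesis unfolding proj_point_def using assms(2)
    by (auto, metis mult_eq_0_iff, metis divide_eq_0_iff)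
qed

theorem corollary3p10:
  fixes V :: "'v set" and E :: "'v set set"
  assumes "card (UNIV :: 'a::{finite,field} set) \<ge> 3"
    and "simple_graph V E"
    and "unicyclic V E"
    and "\<forall>C. is_cycle E C \<longrightarrow> odd (cycle_length C)"
  shows "(toric_set V E :: ('v set \<Rightarrow> 'a::{finite,field}) set set) = proj_torus E"
proof -
  have fV: "finite V" and Esub: "\<forall>e\<in>E. e \<subseteq> V \<and> card e = 2"
    using assms(2) by (auto simp: simple_graph_def)
  have fE: "finite E" using fV Esub by (meson Pow_iff finite_Pow_iff finite_subset subsetI)
  obtain C0 where c0: "is_cycle E C0" and uniq: "\<forall>C. is_cycle E C \<longrightarrow> C = C0"
    using assms(3) unfolding unicyclic_def by metis
  then obtain vs where vs3: "length vs \<ge> 3" and dvs: "distinct vs"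
    and C0: "C0 = {{vs ! i, vs ! ((i + 1) mod length vs)} | i. i < length vs}" and C0E: "C0 \<subseteq> E"
    unfolding is_cycle_def by blast
  define k where "k = length vs"
  have oddk: "odd k" using assms(4) c0 cycle_card[OF vs3 dvs] C0
    unfolding cycle_length_def k_def by metis
  define p where "p = vs ! 0"
  define r where "r = vs ! (k - 1)"
  define e0 where "e0 = {r, p}"
  have "k - 1 + 1 = k" using vs3 unfolding k_def by linarith
  hence "(k - 1 + 1) mod k = 0" by simp
  hence "vs ! ((k - 1 + 1) mod k) = p" by (simp add: p_def)
  moreover have "k - 1 < length vs" using vs3 unfolding k_def by linarith
  ultimately have e0C: "e0 \<in> C0" unfolding C0 e0_def r_def k_def
    by blast
  define F where "F = E - {e0}"
  have fF: "finite F" using fE by (simp add: F_def)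
  have cF: "\<forall>e\<in>F. card e = 2" using Esub by (simp add: F_def)
  have acyc: "\<not>(\<exists>C. is_cycle F C)"
  proof
    assume "\<exists>C. is_cycle F C"
    then obtain C where C: "is_cycle F C" by blast
    hence "C \<subseteq> F" unfolding is_cycle_def by blast
    moreover have "C = C0" using uniq is_cycle_mono[OF C] by (simp add: F_def)
    ultimately show False using e0C by (auto simp: F_def)
  qed
  obtain \<sigma> :: "'v \<Rightarrow> bool" where s: "\<forall>a b. {a,b} \<in> F \<longrightarrow> \<sigma> a \<noteq> \<sigma> b"
    using forest_color[OF fF cF acyc] by blast
  have par: "i < k \<Longrightarrow> \<sigma> (vs ! i) = (\<sigma> p = even i)" for i
  proof (induction i)
    case 0
    then show ?case by (simp add: p_def)
  next
    case (Suc i)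
    have "(i + 1) mod k = i + 1" using Suc.prems by simp
    hence inC: "{vs ! i, vs ! (Suc i)} \<in> C0" unfolding C0 using Suc.prems
      by (auto simp: k_def intro!: exI[of _ i])
    have ne: "{vs ! i, vs ! (Suc i)} \<noteq> e0"
    proof
      assume "{vs ! i, vs ! (Suc i)} = e0"
      hence "(vs ! i = r \<and> vs ! Suc i = p) \<or> (vs ! i = p \<and> vs ! Suc i = r)"
        by (auto simp: e0_def doubleton_eq_iff)
      moreover have "k - 1 < k" "0 < k" using vs3 by (auto simp: k_def)
      ultimately have "(i = k - 1 \<and> Suc i = 0) \<or> (i = 0 \<and> Suc i = k - 1)"
        using nth_eq_iff_index_eq[OF dvs] Suc.prems unfolding r_def p_def k_def
        by (metis Suc_lessD)
      then show False using vs3 by (auto simp: k_def)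
    qed
    have "{vs ! i, vs ! (Suc i)} \<in> F" using inC ne C0E by (auto simp: F_def)
    hence "\<sigma> (vs ! i) \<noteq> \<sigma> (vs ! Suc i)" using s by blast
    then show ?case using Suc by auto
  qed
  have srp: "\<sigma> r = \<sigma> p"
    using par[of "k - 1"] oddk vs3 by (simp add: r_def k_def)
  show ?thesis
  proof
    show "toric_set V E \<subseteq> (proj_torus E :: ('v set \<Rightarrow> 'a) set set)"
    proof
      fix P :: "('v set \<Rightarrow> 'a) set" assume "P \<in> toric_set V E"
      then obtain x :: "'v \<Rightarrow> 'a" where P: "P = proj_point E (\<lambda>e. \<Prod>v\<in>e. x v)" and x: "\<forall>v\<in>V. x v \<noteq> 0"
        unfolding toric_set_def by blast
      have "\<forall>e\<in>E. (\<Prod>v\<in>e. x v) \<noteq> 0"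
      proof
        fix e assume "e \<in> E"
        hence "e \<subseteq> V" "finite e" using Esub by (auto intro: card_ge_0_finite)
        thus "(\<Prod>v\<in>e. x v) \<noteq> 0" using x by (auto simp: prod_zero_iff)
      qed
      thus "P \<in> proj_torus E" unfolding proj_torus_def P by blast
    qed
  next
    show "(proj_torus E :: ('v set \<Rightarrow> 'a) set set) \<subseteq> toric_set V E"
    proof
      fix P :: "('v set \<Rightarrow> 'a) set" assume "P \<in> proj_torus E"
      then obtain y :: "'v set \<Rightarrow> 'a" where P: "P = proj_point E y" and y: "\<forall>e\<in>E. y e \<noteq> 0"
        unfolding proj_torus_def by blast
      obtain x :: "'v \<Rightarrow> 'a" where x0: "\<forall>w. x w \<noteq> 0" and xs: "\<forall>a b. {a,b} \<in> F \<longrightarrow> x a * x b = y {a,b}"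
        using forest_solve[OF fF cF acyc] y by (auto simp: F_def)
      have e0E: "e0 \<in> E" using e0C C0E by blast
      define \<beta> where "\<beta> = x p * x r / y e0"
      have b0: "\<beta> \<noteq> 0" using x0 y e0E by (simp add: \<beta>_def)
      define x' where "x' w = x w * (if \<sigma> w = \<sigma> p then 1 else \<beta>)" for w
      have x'0: "\<forall>w. x' w \<noteq> 0" using x0 b0 by (simp add: x'_def)
      have key: "\<forall>e\<in>E. (\<Prod>v\<in>e. x' v) = \<beta> * y e"
      proof
        fix e assume eE: "e \<in> E"
        then obtain a b where ab: "a \<noteq> b" "e = {a,b}" using Esub card2E by blast
        have pr: "(\<Prod>v\<in>e. x' v) = x' a * x' b" using ab by simp
        show "(\<Prod>v\<in>e. x' v) = \<beta> * y e"
        proof (cases "e = e0")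
          case True
          hence "(a = r \<and> b = p) \<or> (a = p \<and> b = r)" using ab by (auto simp: e0_def doubleton_eq_iff)
          then show ?thesis using pr srp True y e0E
            by (auto simp: x'_def \<beta>_def)
        next
          case False
          hence "{a,b} \<in> F" using eE ab by (simp add: F_def)
          hence "\<sigma> a \<noteq> \<sigma> b" "x a * x b = y {a,b}" using s xs by auto
          then show ?thesis using pr ab by (auto simp: x'_def)
        qed
      qed
      have "P = proj_point E (\<lambda>e. \<Prod>v\<in>e. x' v)"
        using proj_point_scale[OF key b0] P by simp
      thus "P \<in> toric_set V E" unfolding toric_set_def using x'0 by blast
    qed
  qed
qed

end
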